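(* Let $H=(A,B;E)$ be a bipartite graph with parts $A,B$, let $n_1=|A|$, $n_2=|B|$, and let $\alpha=|E|/(n_1n_2)$ be its edge density. Then $H$ contains a $K_p^{(3)}$-immersion for every $p\in\mathbb{N}$ with $p\leq\min\{\alpha n_1/16,\ \alpha^2 n_2/192\}$.
   Context: An $H'$-immersion in a graph $G$ is an injective map $\phi:V(H')\to V(G)$ with, for each $uv\in E(H')$, a $\phi(u)$–$\phi(v)$ path $P_{uv}$ in $G$, the paths pairwise edge-disjoint; a $K_p^{(3)}$-immersion is a $K_p$-immersion in which every path $P_{uv}$ has length exactly $4$. *)

theory Defs
  imports Complex_Main
begin

definition bipartite_graph :: "'a set \<Rightarrow> 'a set \<Rightarrow> 'a set set \<Rightarrow> bool" where
  "bipartite_graph A B E \<longleftrightarrow> finite A \<and> finite B \<and> A \<inter> B = {} \<and>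
     (\<forall>e\<in>E. \<exists>a\<in>A. \<exists>b\<in>B. e = {a, b})"

definition edge_density :: "'a set \<Rightarrow> 'a set \<Rightarrow> 'a set set \<Rightarrow> real" where
  "edge_density A B E = real (card E) / (real (card A) * real (card B))"

text \<open>A path given by its vertex sequence: distinct vertices, consecutive ones adjacent.
  Its length is the number of edges, i.e. length xs - 1.\<close>
definition is_path :: "'a set set \<Rightarrow> 'a list \<Rightarrow> bool" where
  "is_path E xs \<longleftrightarrow> xs \<noteq> [] \<and> distinct xs \<and>
     (\<forall>i. Suc i < length xs \<longrightarrow> {xs ! i, xs ! Suc i} \<in> E)"

definition path_edges :: "'a list \<Rightarrow> 'a set set" where
  "path_edges xs = {{xs ! i, xs ! Suc i} | i. Suc i < length xs}"

text \<open>A K_p^(3)-immersion in the graph with vertex set V and edge set E: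
  K_p has vertex set {0..<p}; phi is injective into V, and every edge ij (i<j) of K_p
  is mapped to a phi(i)-phi(j) path of length exactly 4, the paths pairwise edge-disjoint.\<close>
definition has_K3_immersion :: "'a set \<Rightarrow> 'a set set \<Rightarrow> nat \<Rightarrow> bool" where
  "has_K3_immersion V E p \<longleftrightarrow>
     (\<exists>(\<phi> :: nat \<Rightarrow> 'a) (P :: nat \<Rightarrow> nat \<Rightarrow> 'a list).
        inj_on \<phi> {0..<p} \<and> \<phi> ` {0..<p} \<subseteq> V \<and>
        (\<forall>i j. i < j \<and> j < p \<longrightarrow>
            is_path E (P i j) \<and> length (P i j) = 5 \<and>
            hd (P i j) = \<phi> i \<and> last (P i j) = \<phi> j) \<and>
        (\<forall>i j k l. i < j \<and> j < p \<and> k < l \<and> l < p \<and> (i, j) \<noteq> (k, l) \<longrightarrow>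
            path_edges (P i j) \<inter> path_edges (P k l) = {}))"

end

theory Submission
  imports Defs
begin


lemma path_edges5: "path_edges [a,b,c,d,e] = {{a,b},{b,c},{c,d},{d,e}}"
proof -
  have "path_edges [a,b,c,d,e] = (\<lambda>i. {[a,b,c,d,e]!i, [a,b,c,d,e]!Suc i}) ` {0..<4}"
    unfolding path_edges_def by auto
  moreover have "{0..<4::nat} = {0,1,2,3}" by auto
  ultimately show ?thesis by (simp add: numeral_2_eq_2 numeral_3_eq_3)
qed

lemma edges_disj:
 assumes "A \<inter> B = {}" "u\<in>A" "v\<in>A" "c\<in>A" "w\<in>A" "z\<in>A" "c'\<in>A" "b\<in>B" "b'\<in>B" "x1\<in>B" "x3\<in>B"
 "c \<noteq> w" "c \<noteq> z" "c' \<noteq> u" "c' \<noteq> v"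
 "u = w \<Longrightarrow> b \<noteq> x1" "u = z \<Longrightarrow> b \<noteq> x3" "v = w \<Longrightarrow> b' \<noteq> x1" "v = z \<Longrightarrow> b' \<noteq> x3"
 "c = c' \<Longrightarrow> b \<noteq> x1 \<and> b \<noteq> x3 \<and> b' \<noteq> x1 \<and> b' \<noteq> x3"
 shows "path_edges [u,b,c,b',v] \<inter> path_edges [w,x1,c',x3,z] = {}"
proof -
  have AB: "\<And>x y. x \<in> A \<Longrightarrow> y \<in> B \<Longrightarrow> x \<noteq> y" using assms(1) by blast
  note t = AB[OF assms(2) assms(8)] AB[OF assms(2) assms(9)] AB[OF assms(2) assms(10)] AB[OF assms(2) assms(11)]
    AB[OF assms(3) assms(8)] AB[OF assms(3) assms(9)] AB[OF assms(3) assms(10)] AB[OF assms(3) assms(11)]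
    AB[OF assms(4) assms(8)] AB[OF assms(4) assms(9)] AB[OF assms(4) assms(10)] AB[OF assms(4) assms(11)]
    AB[OF assms(5) assms(8)] AB[OF assms(5) assms(9)] AB[OF assms(5) assms(10)] AB[OF assms(5) assms(11)]
    AB[OF assms(6) assms(8)] AB[OF assms(6) assms(9)] AB[OF assms(6) assms(10)] AB[OF assms(6) assms(11)]
    AB[OF assms(7) assms(8)] AB[OF assms(7) assms(9)] AB[OF assms(7) assms(10)] AB[OF assms(7) assms(11)]
  show ?thesis unfolding path_edges5 using assms(12-20) t
    by (simp add: doubleton_eq_iff) (metis)
qed

definition cod :: "'a set \<Rightarrow> 'a set set \<Rightarrow> 'a \<Rightarrow> 'a \<Rightarrow> nat" where
  "cod B E x y = card {b\<in>B. {x,b}\<in>E \<and> {y,b}\<in>E}"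

definition shp :: "'a set \<Rightarrow> 'a set \<Rightarrow> 'a set set \<Rightarrow> (nat \<Rightarrow> 'a) \<Rightarrow> nat \<Rightarrow> nat \<Rightarrow> nat \<Rightarrow> 'a list \<Rightarrow> bool" where
  "shp A B E \<phi> p i j xs \<longleftrightarrow> (\<exists>b c b'. xs = [\<phi> i, b, c, b', \<phi> j] \<and> b\<in>B \<and> b'\<in>B \<and> b\<noteq>b' \<and> c\<in>A \<and>
     c \<notin> \<phi>`{0..<p} \<and> {\<phi> i,b}\<in>E \<and> {b,c}\<in>E \<and> {c,b'}\<in>E \<and> {b',\<phi> j}\<in>E)"

lemma shp_path:
  assumes "A \<inter> B = {}" "shp A B E \<phi> p i j xs" "inj_on \<phi> {0..<p}" "\<phi> ` {0..<p} \<subseteq> A" "i < j" "j < p"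
  shows "is_path E xs \<and> length xs = 5 \<and> hd xs = \<phi> i \<and> last xs = \<phi> j"
proof -
  obtain b c b' where xs: "xs = [\<phi> i, b, c, b', \<phi> j]" and h: "b\<in>B" "b'\<in>B" "b\<noteq>b'" "c\<in>A"
     "c \<notin> \<phi>`{0..<p}" "{\<phi> i,b}\<in>E" "{b,c}\<in>E" "{c,b'}\<in>E" "{b',\<phi> j}\<in>E"
    using assms(2) unfolding shp_def by blast
  have pi: "\<phi> i \<in> A" "\<phi> j \<in> A" using assms by auto
  have ij: "\<phi> i \<noteq> \<phi> j" using assms(3,5,6) by (auto dest: inj_onD)
  have ci: "c \<noteq> \<phi> i" "c \<noteq> \<phi> j" using h(5) assms(5,6) by auto
  have d: "distinct xs" unfolding xs using h pi ij ci assms(1) by auto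
  have e: "\<forall>n. Suc n < length xs \<longrightarrow> {xs ! n, xs ! Suc n} \<in> E"
  proof (intro allI impI)
    fix n assume "Suc n < length xs"
    then have "n = 0 \<or> n = 1 \<or> n = 2 \<or> n = 3" unfolding xs by auto
    then show "{xs ! n, xs ! Suc n} \<in> E" unfolding xs using h by (auto simp: numeral_2_eq_2 numeral_3_eq_3)
  qed
  show ?thesis using d e unfolding is_path_def xs by simp
qed

lemma greedy:
  assumes bip: "bipartite_graph A B E"
   and inj: "inj_on \<phi> {0..<p}" and im: "\<phi> ` {0..<p} \<subseteq> A"
   and cand: "\<And>i j. i<j \<Longrightarrow> j<p \<Longrightarrow> p < card {c\<in>A. c \<notin> \<phi>`{0..<p} \<and> 3*p < cod B E (\<phi> i) c \<and> 3*p < cod B E (\<phi> j) c}"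
  shows "has_K3_immersion (A\<union>B) E p"
proof -
  have finA: "finite A" and finB: "finite B" and AB: "A \<inter> B = {}" using bip unfolding bipartite_graph_def by auto
  define Pairs where "Pairs = {(i,j). i<j \<and> j<p}"
  have Psub: "Pairs \<subseteq> {0..<p} \<times> {0..<p}" unfolding Pairs_def by auto
  have finP: "finite Pairs" using Psub finite_subset by blast
  have cardP: "card Pairs \<le> p*p" using card_mono[OF _ Psub] by simp
  define Inv where "Inv Q P \<longleftrightarrow> (\<forall>q\<in>Q. shp A B E \<phi> p (fst q) (snd q) (P q)) \<and>
     (\<forall>q\<in>Q. \<forall>q'\<in>Q. q \<noteq> q' \<longrightarrow> path_edges (P q) \<inter> path_edges (P q') = {})" for Q and P :: "nat \<times> nat \<Rightarrow> 'a list"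
  have main: "Q \<subseteq> Pairs \<Longrightarrow> \<exists>P. Inv Q P" if "finite Q" for Q
  using that proof (induction Q rule: finite_induct)
    case empty
    then show ?case unfolding Inv_def by auto
  next
    case (insert q Q)
    obtain P where IP: "Inv Q P" using insert by auto
    obtain i j where q: "q = (i,j)" by fastforce
    have ij: "i < j" "j < p" using insert(4) q unfolding Pairs_def by auto
    have QP: "Q \<subseteq> Pairs" using insert by auto
    define load where "load c = card {q\<in>Q. P q ! 2 = c}" for c
    define C0 where "C0 = {c\<in>A. c \<notin> \<phi>`{0..<p} \<and> 3*p < cod B E (\<phi> i) c \<and> 3*p < cod B E (\<phi> j) c}"
    define Full where "Full = {c\<in>C0. p \<le> load c}"
    have finC0: "finite C0" unfolding C0_def using finA by auto
    have finFull: "finite Full" unfolding Full_def using finC0 by auto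
    have "(\<Sum>c\<in>Full. load c) = card (\<Union>c\<in>Full. {q\<in>Q. P q ! 2 = c})"
      unfolding load_def by (rule card_UN_disjoint[symmetric]) (use finFull insert(1) in auto)
    also have "\<dots> \<le> card Q" by (rule card_mono) (use insert(1) in auto)
    also have "\<dots> \<le> p * p" using card_mono[OF finP QP] cardP by linarith
    finally have s1: "(\<Sum>c\<in>Full. load c) \<le> p * p" .
    have "card Full * p \<le> (\<Sum>c\<in>Full. load c)"
      using sum_bounded_below[of Full p load] unfolding Full_def by auto
    with s1 have "card Full * p \<le> p * p" by linarith
    then have cF: "card Full \<le> p" using ij by auto
    have "p < card C0" unfolding C0_def using cand[OF ij] .
    then have "0 < card (C0 - Full)" using diff_card_le_card_Diff[OF finFull, of C0] cF by linarith
    then have "C0 - Full \<noteq> {}" using card_gt_0_iff by blast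
    then obtain c where "c \<in> C0 - Full" by blast
    then have c: "c \<in> C0" "c \<notin> Full" by auto
    have cA: "c \<in> A" "c \<notin> \<phi>`{0..<p}" and ci: "3*p < cod B E (\<phi> i) c" and cj: "3*p < cod B E (\<phi> j) c"
      and lc: "load c < p" using c unfolding C0_def Full_def by auto
    define FF where "FF k = (\<lambda>l. if k<l then P (k,l) ! 1 else P (l,k) ! 3) ` {0..<p}" for k
    define GG where "GG = (\<Union>q\<in>{q\<in>Q. P q ! 2 = c}. {P q ! 1, P q ! 3})"
    have cFF: "card (FF k) \<le> p" for k
    proof -
      have "card (FF k) \<le> card {0..<p}" unfolding FF_def by (rule card_image_le) simp
      then show ?thesis by simp
    qed
    have finFF: "finite (FF k)" for k unfolding FF_def by simp
    have finGG: "finite GG" unfolding GG_def using insert(1) by auto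
    have "card GG \<le> (\<Sum>q\<in>{q\<in>Q. P q ! 2 = c}. card {P q ! 1, P q ! 3})"
      unfolding GG_def by (rule card_UN_le) (use insert(1) in auto)
    also have "\<dots> \<le> load c * 2"
    proof -
      have "(\<Sum>q\<in>{q\<in>Q. P q ! 2 = c}. card {P q ! 1, P q ! 3}) \<le> of_nat (card {q\<in>Q. P q ! 2 = c}) * (2::nat)"
        by (rule sum_bounded_above) (simp add: card_insert_if)
      then show ?thesis by (simp add: load_def)
    qed
    finally have cGG: "card GG \<le> 2 * p - 2" using lc by linarith
    define S1 where "S1 = {b\<in>B. {\<phi> i,b}\<in>E \<and> {c,b}\<in>E}"
    define S2 where "S2 = {b\<in>B. {\<phi> j,b}\<in>E \<and> {c,b}\<in>E}"
    have finS: "finite S1" "finite S2" unfolding S1_def S2_def using finB by auto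
    have "card S1 - card (FF i \<union> GG) \<le> card (S1 - (FF i \<union> GG))"
      by (rule diff_card_le_card_Diff) (use finFF finGG in auto)
    moreover have "card (FF i \<union> GG) \<le> card (FF i) + card GG" by (rule card_Un_le)
    moreover have "3*p < card S1" using ci unfolding cod_def S1_def .
    ultimately have "0 < card (S1 - (FF i \<union> GG))" using cFF[of i] cGG by linarith
    then have "S1 - (FF i \<union> GG) \<noteq> {}" using card_gt_0_iff by blast
    then obtain b where "b \<in> S1 - (FF i \<union> GG)" by blast
    then have b: "b \<in> S1" "b \<notin> FF i" "b \<notin> GG" by auto
    have "card S2 - card (FF j \<union> GG \<union> {b}) \<le> card (S2 - (FF j \<union> GG \<union> {b}))"
      by (rule diff_card_le_card_Diff) (use finFF finGG in auto)
    moreover have "card (FF j \<union> GG \<union> {b}) \<le> card (FF j) + card GG + 1"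
      using card_Un_le[of "FF j \<union> GG" "{b}"] card_Un_le[of "FF j" GG] by simp
    moreover have "3*p < card S2" using cj unfolding cod_def S2_def .
    ultimately have "0 < card (S2 - (FF j \<union> GG \<union> {b}))" using cFF[of j] cGG ij by linarith
    then have "S2 - (FF j \<union> GG \<union> {b}) \<noteq> {}" using card_gt_0_iff by blast
    then obtain b' where "b' \<in> S2 - (FF j \<union> GG \<union> {b})" by blast
    then have b': "b' \<in> S2" "b' \<notin> FF j" "b' \<notin> GG" "b' \<noteq> b" by auto
    define P' where "P' = P(q := [\<phi> i, b, c, b', \<phi> j])"
    have shq: "shp A B E \<phi> p i j [\<phi> i, b, c, b', \<phi> j]"
      unfolding shp_def using b b' cA unfolding S1_def S2_def by (auto simp: insert_commute)
    have disj: "path_edges [\<phi> i, b, c, b', \<phi> j] \<inter> path_edges (P q') = {}" if q': "q' \<in> Q" for q'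
    proof -
      obtain k l where kl: "q' = (k,l)" by fastforce
      have klp: "k < l" "l < p" using q' QP kl unfolding Pairs_def by auto
      have "shp A B E \<phi> p k l (P q')" using IP q' kl unfolding Inv_def by auto
      then obtain x1 c' x3 where Pq: "P q' = [\<phi> k, x1, c', x3, \<phi> l]" and h: "x1\<in>B" "x3\<in>B" "c'\<in>A"
         "c' \<notin> \<phi>`{0..<p}" unfolding shp_def by blast
      have eq: "a < p \<Longrightarrow> a' < p \<Longrightarrow> \<phi> a = \<phi> a' \<Longrightarrow> a = a'" for a a' using inj by (auto dest: inj_onD)
      have 1: "\<phi> i = \<phi> k \<Longrightarrow> b \<noteq> x1"
      proof
        assume "\<phi> i = \<phi> k" "b = x1"
        then have "i = k" using eq ij klp by auto
        then have "x1 = (\<lambda>l'. if i<l' then P (i,l') ! 1 else P (l',i) ! 3) l" using klp Pq kl by simp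
        then have "x1 \<in> FF i" unfolding FF_def using klp by (auto intro: image_eqI)
        then show False using b \<open>b = x1\<close> by auto
      qed
      have 2: "\<phi> i = \<phi> l \<Longrightarrow> b \<noteq> x3"
      proof
        assume "\<phi> i = \<phi> l" "b = x3"
        then have "i = l" using eq ij klp by auto
        then have "x3 = (\<lambda>l'. if i<l' then P (i,l') ! 1 else P (l',i) ! 3) k" using klp Pq kl by simp
        then have "x3 \<in> FF i" unfolding FF_def using klp by (auto intro: image_eqI)
        then show False using b \<open>b = x3\<close> by auto
      qed
      have 3: "\<phi> j = \<phi> k \<Longrightarrow> b' \<noteq> x1"
      proof
        assume "\<phi> j = \<phi> k" "b' = x1"
        then have "j = k" using eq ij klp by auto
        then have "x1 = (\<lambda>l'. if j<l' then P (j,l') ! 1 else P (l',j) ! 3) l" using klp Pq kl by simp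
        then have "x1 \<in> FF j" unfolding FF_def using klp by (auto intro: image_eqI)
        then show False using b' \<open>b' = x1\<close> by auto
      qed
      have 4: "\<phi> j = \<phi> l \<Longrightarrow> b' \<noteq> x3"
      proof
        assume "\<phi> j = \<phi> l" "b' = x3"
        then have "j = l" using eq ij klp by auto
        then have "x3 = (\<lambda>l'. if j<l' then P (j,l') ! 1 else P (l',j) ! 3) k" using klp Pq kl by simp
        then have "x3 \<in> FF j" unfolding FF_def using klp by (auto intro: image_eqI)
        then show False using b' \<open>b' = x3\<close> by auto
      qed
      have 5: "c = c' \<Longrightarrow> b \<noteq> x1 \<and> b \<noteq> x3 \<and> b' \<noteq> x1 \<and> b' \<noteq> x3"
      proof -
        assume "c = c'"
        then have m: "(k,l) \<in> {q\<in>Q. P q ! 2 = c}" using q' Pq kl by simp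
        have "{P (k,l) ! 1, P (k,l) ! 3} \<subseteq> GG" unfolding GG_def using m by blast
        moreover have "P (k,l) ! 1 = x1" "P (k,l) ! 3 = x3" using Pq kl by auto
        ultimately have "x1 \<in> GG" "x3 \<in> GG" by auto
        then show ?thesis using b b' by auto
      qed
      show ?thesis unfolding Pq
        by (rule edges_disj[OF AB]) (use im ij klp cA h b b' 1 2 3 4 5 in \<open>auto simp: S1_def S2_def\<close>)
    qed
    have "Inv (insert q Q) P'"
      unfolding Inv_def
    proof (intro conjI ballI impI)
      fix q1 assume "q1 \<in> insert q Q"
      then show "shp A B E \<phi> p (fst q1) (snd q1) (P' q1)"
        using IP shq q unfolding Inv_def P'_def by auto
    next
      fix q1 q2 assume "q1 \<in> insert q Q" "q2 \<in> insert q Q" "q1 \<noteq> q2"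
      note h12 = this
      show "path_edges (P' q1) \<inter> path_edges (P' q2) = {}"
      proof (cases "q1 = q")
        case True
        then have "q2 \<in> Q" "q2 \<noteq> q" using h12 by auto
        then show ?thesis using disj[of q2] True unfolding P'_def by simp
      next
        case False
        note F = this
        show ?thesis
        proof (cases "q2 = q")
          case True
          then have "q1 \<in> Q" using h12 F by auto
          then show ?thesis using disj[of q1] True F unfolding P'_def by (simp add: Int_commute)
        next
          case False
          then have "q1 \<in> Q" "q2 \<in> Q" using h12 F by auto
          then show ?thesis using IP h12 F False unfolding Inv_def P'_def by simp
        qed
      qed
    qed
    then show ?case by blast
  qed
  obtain P where IP: "Inv Pairs P" using main[OF finP] by auto
  have G1: "\<forall>i j. i < j \<and> j < p \<longrightarrow> is_path E (P (i,j)) \<and> length (P (i,j)) = 5 \<and>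
         hd (P (i,j)) = \<phi> i \<and> last (P (i,j)) = \<phi> j"
  proof (intro allI impI)
    fix i j assume ij: "i < j \<and> j < p"
    then have "shp A B E \<phi> p i j (P (i,j))" using IP unfolding Inv_def Pairs_def by auto
    then show "is_path E (P (i,j)) \<and> length (P (i,j)) = 5 \<and> hd (P (i,j)) = \<phi> i \<and> last (P (i,j)) = \<phi> j"
      using shp_path[OF AB _ inj im] ij by blast
  qed
  have G2: "\<forall>i j k l. i < j \<and> j < p \<and> k < l \<and> l < p \<and> (i, j) \<noteq> (k, l) \<longrightarrow>
            path_edges (P (i,j)) \<inter> path_edges (P (k,l)) = {}"
    using IP unfolding Inv_def Pairs_def by auto
  have im2: "\<phi> ` {0..<p} \<subseteq> A \<union> B" using im by auto
  show ?thesis unfolding has_K3_immersion_def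
    by (rule exI[of _ \<phi>], rule exI[of _ "\<lambda>i j. P (i,j)"]) (use G1 G2 inj im2 in simp)
qed



lemma double_count:
  assumes "finite X" "finite Y"
  shows "(\<Sum>x\<in>X. card {y\<in>Y. R x y}) = (\<Sum>y\<in>Y. card {x\<in>X. R x y})"
proof -
  have "(\<Sum>x\<in>X. card {y\<in>Y. R x y}) = (\<Sum>x\<in>X. \<Sum>y\<in>Y. if R x y then 1 else 0)"
    using assms by (simp add: sum.inter_filter[symmetric])
  also have "\<dots> = (\<Sum>y\<in>Y. \<Sum>x\<in>X. if R x y then 1 else 0)" by (rule sum.swap)
  also have "\<dots> = (\<Sum>y\<in>Y. card {x\<in>X. R x y})"
    using assms by (simp add: sum.inter_filter[symmetric])
  finally show ?thesis .
qed

lemma cauchy_schwarz_sum: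
  fixes f :: "'b \<Rightarrow> real"
  assumes "finite S"
  shows "(\<Sum>x\<in>S. f x)^2 \<le> real (card S) * (\<Sum>x\<in>S. (f x)^2)"
proof (cases "S = {}")
  case True then show ?thesis by simp
next
  case False
  define n where "n = real (card S)"
  have n: "n > 0" using False assms unfolding n_def by (simp add: card_gt_0_iff)
  define s where "s = (\<Sum>x\<in>S. f x)"
  define m where "m = s / n"
  have "0 \<le> (\<Sum>x\<in>S. (f x - m)^2)" by (rule sum_nonneg) simp
  also have "\<dots> = (\<Sum>x\<in>S. (f x)^2) - (\<Sum>x\<in>S. 2 * f x * m) + (\<Sum>x\<in>S. m^2)"
    by (simp add: power2_diff sum.distrib sum_subtractf)
  also have "\<dots> = (\<Sum>x\<in>S. (f x)^2) - 2 * m * s + n * m^2"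
  proof -
    have "(\<Sum>x\<in>S. 2 * f x * m) = (\<Sum>x\<in>S. f x) * (2*m)" by (simp add: sum_distrib_right sum_distrib_left mult_ac)
    then show ?thesis unfolding s_def n_def by simp
  qed
  also have "\<dots> = (\<Sum>x\<in>S. (f x)^2) - s^2 / n"
    unfolding m_def using n by (simp add: field_simps power2_eq_square)
  finally have "s^2 / n \<le> (\<Sum>x\<in>S. (f x)^2)" by simp
  then show ?thesis using n unfolding s_def n_def by (simp add: field_simps)
qed

lemma edge_count:
  assumes "bipartite_graph A B E"
  shows "card E = (\<Sum>b\<in>B. card {a\<in>A. {a,b}\<in>E})"
proof -
  have finA: "finite A" and finB: "finite B" and AB: "A \<inter> B = {}"
    and EE: "\<forall>e\<in>E. \<exists>a\<in>A. \<exists>b\<in>B. e = {a, b}" using assms unfolding bipartite_graph_def by auto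
  define S where "S = Sigma B (\<lambda>b. {a\<in>A. {a,b}\<in>E})"
  have cS: "card S = (\<Sum>b\<in>B. card {a\<in>A. {a,b}\<in>E})" unfolding S_def
    by (rule card_SigmaI) (use finA finB in auto)
  have "E = (\<lambda>(b,a). {a,b}) ` S" unfolding S_def using EE by auto
  moreover have "inj_on (\<lambda>(b,a). {a,b}) S"
    unfolding inj_on_def S_def using AB by (auto simp: doubleton_eq_iff)
  ultimately have "card E = card S" by (simp add: card_image)
  then show ?thesis using cS by simp
qed



theorem lemma5p4:
  fixes A B :: "'a set" and E :: "'a set set" and p :: nat
  assumes "bipartite_graph A B E"
    and "real p \<le> min (edge_density A B E * real (card A) / 16)
                        ((edge_density A B E)\<^sup>2 * real (card B) / 192)"
  shows "has_K3_immersion (A \<union> B) E p"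
proof (cases "p = 0")
  case True
  show ?thesis by (rule greedy[OF assms(1), of "\<lambda>_. undefined"]) (use True in auto)
next
  case False
  have bip: "bipartite_graph A B E" by fact
  have finA: "finite A" and finB: "finite B" and AB: "A \<inter> B = {}"
    using bip unfolding bipartite_graph_def by auto
  define n1 where "n1 = real (card A)"
  define n2 where "n2 = real (card B)"
  define al where "al = edge_density A B E"
  have p1: "real p \<ge> 1" using False by simp
  have hp1: "real p \<le> al * n1 / 16" and hp2: "real p \<le> al^2 * n2 / 192"
    using assms(2) unfolding al_def n1_def n2_def by auto
  have n1pos: "n1 > 0" using hp1 p1 unfolding n1_def by (cases "card A = 0") auto
  have alpos: "al > 0" using hp1 p1 n1pos by (smt (verit) divide_nonpos_pos mult_nonpos_nonneg)
  have n2pos: "n2 > 0" using alpos unfolding al_def edge_density_def n2_def by (cases "card B = 0") auto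
  have Bne: "B \<noteq> {}" using n2pos unfolding n2_def by auto
  have e_eq: "real (card E) = al * n1 * n2"
    unfolding al_def edge_density_def using n1pos n2pos unfolding n1_def n2_def by simp
  define T where "T b = {a\<in>A. {a,b}\<in>E}" for b
  define D where "D = al^2 * n2 / 16"
  have D12: "D \<ge> 12 * real p" using hp2 unfolding D_def by simp
  define good where "good x y \<longleftrightarrow> D \<le> real (cod B E x y)" for x y
  define Z where "Z b = card {xy\<in>T b \<times> T b. \<not> good (fst xy) (snd xy)}" for b
  define Bad where "Bad = {xy\<in>A \<times> A. \<not> good (fst xy) (snd xy)}"
  have TA: "T b \<subseteq> A" for b unfolding T_def by auto
  have finT: "finite (T b)" for b using finA TA finite_subset by blast
  have codeq: "x \<in> A \<Longrightarrow> y \<in> A \<Longrightarrow> {b\<in>B. x \<in> T b \<and> y \<in> T b} = {b\<in>B. {x,b}\<in>E \<and> {y,b}\<in>E}" for x y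
    unfolding T_def by auto
  have sum1: "(\<Sum>b\<in>B. card (T b \<times> T b)) = (\<Sum>xy\<in>A\<times>A. cod B E (fst xy) (snd xy))"
  proof -
    have "(\<Sum>b\<in>B. card (T b \<times> T b)) = (\<Sum>b\<in>B. card {xy\<in>A\<times>A. fst xy \<in> T b \<and> snd xy \<in> T b})"
    proof (rule sum.cong)
      fix b assume "b \<in> B"
      have "{xy\<in>A\<times>A. fst xy \<in> T b \<and> snd xy \<in> T b} = T b \<times> T b" using TA by auto
      then show "card (T b \<times> T b) = card {xy\<in>A\<times>A. fst xy \<in> T b \<and> snd xy \<in> T b}" by simp
    qed simp
    also have "\<dots> = (\<Sum>xy\<in>A\<times>A. card {b\<in>B. fst xy \<in> T b \<and> snd xy \<in> T b})"
      by (rule double_count) (use finA finB in auto)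
    also have "\<dots> = (\<Sum>xy\<in>A\<times>A. cod B E (fst xy) (snd xy))"
      by (rule sum.cong) (auto simp: cod_def codeq)
    finally show ?thesis .
  qed
  have sum2: "(\<Sum>b\<in>B. Z b) = (\<Sum>xy\<in>Bad. cod B E (fst xy) (snd xy))"
  proof -
    have "(\<Sum>b\<in>B. Z b) = (\<Sum>b\<in>B. card {xy\<in>Bad. fst xy \<in> T b \<and> snd xy \<in> T b})"
    proof (rule sum.cong)
      fix b assume "b \<in> B"
      have "{xy\<in>Bad. fst xy \<in> T b \<and> snd xy \<in> T b} = {xy\<in>T b \<times> T b. \<not> good (fst xy) (snd xy)}"
        unfolding Bad_def using TA by auto
      then show "Z b = card {xy\<in>Bad. fst xy \<in> T b \<and> snd xy \<in> T b}" unfolding Z_def by simp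
    qed simp
    also have "\<dots> = (\<Sum>xy\<in>Bad. card {b\<in>B. fst xy \<in> T b \<and> snd xy \<in> T b})"
      by (rule double_count) (use finA finB in \<open>auto simp: Bad_def\<close>)
    also have "\<dots> = (\<Sum>xy\<in>Bad. cod B E (fst xy) (snd xy))"
      by (rule sum.cong) (auto simp: cod_def codeq Bad_def)
    finally show ?thesis .
  qed
  have ecount: "card E = (\<Sum>b\<in>B. card (T b))" using edge_count[OF bip] unfolding T_def .
  have CS: "(real (card E))^2 \<le> n2 * (\<Sum>b\<in>B. (real (card (T b)))^2)"
    using cauchy_schwarz_sum[OF finB, of "\<lambda>b. real (card (T b))"] unfolding ecount n2_def
    by (simp add: of_nat_sum)
  have Sd2: "(\<Sum>b\<in>B. (real (card (T b)))^2) = real (\<Sum>xy\<in>A\<times>A. cod B E (fst xy) (snd xy))"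
    unfolding sum1[symmetric] of_nat_sum by (simp add: card_cartesian_product power2_eq_square)
  have SZ: "(\<Sum>b\<in>B. real (Z b)) \<le> n1^2 * D"
  proof -
    have "(\<Sum>b\<in>B. real (Z b)) = (\<Sum>xy\<in>Bad. real (cod B E (fst xy) (snd xy)))"
      using sum2 by (metis of_nat_sum)
    also have "\<dots> \<le> real (card Bad) * D"
      by (rule sum_bounded_above) (auto simp: Bad_def good_def)
    also have "\<dots> \<le> n1^2 * D"
    proof (rule mult_right_mono)
      have "card Bad \<le> card (A \<times> A)" unfolding Bad_def by (rule card_mono) (use finA in auto)
      then show "real (card Bad) \<le> n1^2" unfolding n1_def power2_eq_square
        by (metis of_nat_le_iff of_nat_mult card_cartesian_product)
      show "0 \<le> D" using D12 by simp
    qed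
    finally show ?thesis .
  qed
  have "(\<Sum>b\<in>B. (real (card (T b)))^2 - 8 * real (Z b)) \<ge> al^2 * n1^2 * n2 / 2"
  proof -
    have "(real (card E))^2 / n2 \<le> (\<Sum>b\<in>B. (real (card (T b)))^2)"
      using CS n2pos by (simp add: field_simps)
    moreover have "(real (card E))^2 / n2 = al^2 * n1^2 * n2"
      unfolding e_eq using n2pos by (simp add: field_simps power2_eq_square)
    moreover have "8 * (n1^2 * D) = al^2 * n1^2 * n2 / 2" unfolding D_def by (simp add: field_simps)
    moreover have "(\<Sum>b\<in>B. (real (card (T b)))^2 - 8 * real (Z b)) = (\<Sum>b\<in>B. (real (card (T b)))^2) - 8 * (\<Sum>b\<in>B. real (Z b))"
      by (simp add: sum_subtractf sum_distrib_left)
    ultimately show ?thesis using SZ by linarith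
  qed
  then obtain h where hB: "h \<in> B" and hh: "(real (card (T h)))^2 - 8 * real (Z h) \<ge> al^2 * n1^2 / 2"
  proof -
    assume r: "\<And>h. h \<in> B \<Longrightarrow> al^2 * n1^2 / 2 \<le> (real (card (T h)))^2 - 8 * real (Z h) \<Longrightarrow> thesis"
    show thesis
    proof (rule ccontr)
      assume "\<not> thesis"
      then have lt: "\<And>b. b \<in> B \<Longrightarrow> (real (card (T b)))^2 - 8 * real (Z b) < al^2 * n1^2 / 2"
        using r by force
      have "(\<Sum>b\<in>B. (real (card (T b)))^2 - 8 * real (Z b)) < (\<Sum>b\<in>B. al^2 * n1^2 / 2)"
        by (rule sum_strict_mono) (use finB Bne lt in auto)
      also have "\<dots> = al^2 * n1^2 * n2 / 2" unfolding n2_def by simp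
      finally show False using \<open>_ \<ge> al^2 * n1^2 * n2 / 2\<close> by simp
    qed
  qed
  define t where "t = real (card (T h))"
  have "0 \<le> al^2 * n1^2 / 2" by simp
  then have Z8: "8 * real (Z h) \<le> t^2" using hh unfolding t_def by linarith
  have tge: "t \<ge> al * n1 / 2"
  proof (rule ccontr)
    assume "\<not> ?thesis"
    then have "t^2 < (al * n1 / 2)^2" by (intro power_strict_mono) (auto simp: t_def)
    moreover have "(al * n1 / 2)^2 = al^2 * n1^2 / 4" by (simp add: power_mult_distrib power_divide)
    moreover have "0 \<le> al^2 * n1^2" by simp
    moreover have "0 \<le> real (Z h)" by simp
    ultimately show False using hh unfolding t_def by linarith
  qed
  have t8: "t \<ge> 8 * real p" using tge hp1 by simp
  define bad where "bad x = card {y\<in>T h. \<not> good x y}" for x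
  define R where "R = {x\<in>T h. real (bad x) \<le> t / 4}"
  have Zsum: "Z h = (\<Sum>x\<in>T h. bad x)"
  proof -
    have "{xy\<in>T h \<times> T h. \<not> good (fst xy) (snd xy)} = Sigma (T h) (\<lambda>x. {y\<in>T h. \<not> good x y})" by auto
    then show ?thesis unfolding Z_def bad_def by (simp add: card_SigmaI finT)
  qed
  have cR: "real (card R) \<ge> t / 2"
  proof -
    define Po where "Po = T h - R"
    have finPo: "finite Po" unfolding Po_def using finT by auto
    have "real (card Po) * (t / 4) \<le> (\<Sum>x\<in>Po. real (bad x))"
      by (rule sum_bounded_below) (auto simp: Po_def R_def)
    also have "\<dots> \<le> (\<Sum>x\<in>T h. real (bad x))" by (rule sum_mono2) (auto simp: Po_def finT)
    also have "\<dots> = real (Z h)" unfolding Zsum of_nat_sum ..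
    finally have "real (card Po) * (t / 4) \<le> t^2 / 8" using Z8 by linarith
    moreover have "t > 0" using t8 p1 by simp
    ultimately have "real (card Po) \<le> t / 2" by (simp add: power2_eq_square field_simps) 
    moreover have "card (T h) = card R + card Po"
    proof -
      have RT': "R \<subseteq> T h" unfolding R_def by auto
      have "card Po = card (T h) - card R" unfolding Po_def
        by (rule card_Diff_subset) (use RT' finT finite_subset in auto)
      moreover have "card R \<le> card (T h)" by (rule card_mono[OF finT RT'])
      ultimately show ?thesis by simp
    qed
    ultimately show ?thesis unfolding t_def by simp
  qed
  have "card R \<ge> p" using cR t8 by simp
  then obtain S where SR: "S \<subseteq> R" and cS: "card S = p"
    by (meson obtain_subset_with_card_n)
  have finS: "finite S" using cS False card.infinite by force
  obtain \<phi> where bij: "bij_betw \<phi> {0..<p} S" using ex_bij_betw_nat_finite[OF finS] cS by auto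
  have inj: "inj_on \<phi> {0..<p}" and imS: "\<phi> ` {0..<p} = S" using bij by (auto simp: bij_betw_def)
  have RT: "R \<subseteq> T h" unfolding R_def by auto
  show ?thesis
  proof (rule greedy[OF bip inj])
    show "\<phi> ` {0..<p} \<subseteq> A" using imS SR RT TA by blast
  next
    fix i j assume ij: "i < j" "j < p"
    define x where "x = \<phi> i"
    define y where "y = \<phi> j"
    have xR: "x \<in> R" "y \<in> R" using ij imS SR unfolding x_def y_def by auto
    define C where "C = T h - ({c\<in>T h. \<not> good x c} \<union> {c\<in>T h. \<not> good y c})"
    have "card (T h) - (card {c\<in>T h. \<not> good x c} + card {c\<in>T h. \<not> good y c}) \<le> card C"
    proof -
      have "card (T h) - card ({c\<in>T h. \<not> good x c} \<union> {c\<in>T h. \<not> good y c}) \<le> card C"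
        unfolding C_def by (rule diff_card_le_card_Diff) (use finT in auto)
      moreover have "card ({c\<in>T h. \<not> good x c} \<union> {c\<in>T h. \<not> good y c}) \<le> card {c\<in>T h. \<not> good x c} + card {c\<in>T h. \<not> good y c}"
        by (rule card_Un_le)
      ultimately show ?thesis by linarith
    qed
    moreover have "real (bad x) \<le> t/4" "real (bad y) \<le> t/4" using xR unfolding R_def by auto
    ultimately have cC: "real (card C) \<ge> t / 2" unfolding bad_def t_def by linarith
    have "card C - card (\<phi> ` {0..<p}) \<le> card (C - \<phi> ` {0..<p})"
      by (rule diff_card_le_card_Diff) simp
    moreover have "card (\<phi> ` {0..<p}) = p" using imS cS by simp
    ultimately have "real (card (C - \<phi> ` {0..<p})) \<ge> t/2 - p" using cC by linarith
    then have gt: "p < card (C - \<phi> ` {0..<p})" using t8 p1 by linarith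
    show "p < card {c\<in>A. c \<notin> \<phi>`{0..<p} \<and> 3*p < cod B E (\<phi> i) c \<and> 3*p < cod B E (\<phi> j) c}"
    proof -
      have "C - \<phi> ` {0..<p} \<subseteq> {c\<in>A. c \<notin> \<phi>`{0..<p} \<and> 3*p < cod B E (\<phi> i) c \<and> 3*p < cod B E (\<phi> j) c}"
      proof
        fix c assume c: "c \<in> C - \<phi> ` {0..<p}"
        then have "good x c" "good y c" "c \<in> A" unfolding C_def using TA by auto
        then have "real (3*p) < real (cod B E x c)" "real (3*p) < real (cod B E y c)"
          unfolding good_def using D12 p1 by auto
        then show "c \<in> {c\<in>A. c \<notin> \<phi>`{0..<p} \<and> 3*p < cod B E (\<phi> i) c \<and> 3*p < cod B E (\<phi> j) c}"
          using c \<open>c \<in> A\<close> unfolding x_def y_def by auto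
      qed
      then have "card (C - \<phi> ` {0..<p}) \<le> card {c\<in>A. c \<notin> \<phi>`{0..<p} \<and> 3*p < cod B E (\<phi> i) c \<and> 3*p < cod B E (\<phi> j) c}"
        by (rule card_mono[rotated]) (use finA in auto)
      then show ?thesis using gt by linarith
    qed
  qed
qed

end
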